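(* In the setting below, let $p\neq0$, $a_0,a_2,a_3$ be real constants with $a_2\neq0$, suppose $M$ has constant sectional curvature $K=\dfrac{a_0}{a_2s^2}$, and put $\tilde\theta=-2p\theta$, $\omega_1=a_0\alpha_0+a_2\alpha_2+a_3\,d\theta$ (so $d\omega_1=0$). A natural SU(2)-structure $(\tilde\theta,\omega_1,\omega_2,\omega_3)$ on $\mathcal S$ with these $\tilde\theta,\omega_1$ is double-hypo if and only if there are real constants $b_0,b_1,b_2$ with $$\omega_2=b_0\alpha_0+b_1\alpha_1+b_2\alpha_2,\qquad \omega_3=\frac{Kb_1}{3p}\alpha_0+\frac{s^2Kb_2-b_0}{6s^2p}\alpha_1-\frac{b_1}{3s^2p}\alpha_2,$$ satisfying $$a_3^2-a_0a_2=a_3p,\quad b_1^2-b_0b_2=a_3p,\quad a_0b_2+a_2b_0=0,\quad b_0^2-2s^2Kb_0b_2+s^4K^2b_2^2+4s^2Kb_1^2=36s^4a_3p^3,$$ together with $a_0a_2>0$ and $a_3p>0$. Moreover, in this case $M$ has positive constant sectional curvature $K=9s^2p^2$.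
   Context: Let $(M,g)$ be a connected oriented Riemannian 3-manifold, $s>0$, and $\mathcal S=\{u\in TM:\|u\|=s\}$ the total space of the radius-$s$ tangent sphere bundle with the canonical (Sasaki-induced) metric. An adapted frame at $u\in\mathcal S$: take a positively oriented orthonormal frame $(f_0=u/s,f_1,f_2)$ of $T_{\pi(u)}M$ and set $e_0=f_0^h,e_1=f_1^h,e_2=f_2^h,e_3=f_1^v,e_4=f_2^v$ (horizontal and vertical lifts); dual coframe $e^0,\dots,e^4$, $e^{ij}=e^i\wedge e^j$. Globally defined forms: $\theta=s\,e^0$, $\alpha_0=e^{12}$, $\alpha_1=e^{14}-e^{23}$, $\alpha_2=e^{34}$, $d\theta=e^{31}+e^{42}$; $\alpha_i\wedge d\theta=0$, $\alpha_0\wedge\alpha_1=\alpha_2\wedge\alpha_1=0$, $\alpha_0\wedge\alpha_2=-\frac12\alpha_1\wedge\alpha_1=-\frac12 d\theta\wedge d\theta=e^{1234}$. For constant sectional curvature $K$: $d\alpha_0=s^{-2}\theta\wedge\alpha_1$, $d\alpha_1=2s^{-2}\theta\wedge\alpha_2-2K\theta\wedge\alpha_0$, $d\alpha_2=-K\theta\wedge\alpha_1$. An SU(2)-structure: $(\tilde\theta,\omega_1,\omega_2,\omega_3)$ with (C1) $\tilde\theta\wedge\omega_1\wedge\omega_1\neq0$, $\omega_i\wedge\omega_j=0$ ($i\ne j$), $\omega_1\wedge\omega_1=\omega_2\wedge\omega_2=\omega_3\wedge\omega_3=2v$, $v$ nowhere zero; (C2) $x\lrcorner\omega_1=y\lrcorner\omega_2\Rightarrow\omega_3(x,y)\ge0$.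 Hypo: $d\omega_1=0$, $d(\tilde\theta\wedge\omega_2)=d(\tilde\theta\wedge\omega_3)=0$. Nearly-hypo: $d\omega_2=3\tilde\theta\wedge\omega_3$, $d(\tilde\theta\wedge\omega_1)=-2\omega_1\wedge\omega_1$. Double-hypo: both hypo and nearly-hypo. Natural SU(2)-structure on $\mathcal S$: $\tilde\theta=-2p\theta$ ($p\ne0$ constant), each $\omega_i$ a constant-coefficient combination of $\alpha_0,\alpha_1,\alpha_2,d\theta$. *)

theory Defs
  imports Complex_Main
begin

text \<open>Pointwise (frame-level) model of the canonical tangent sphere bundle of a
3-manifold of constant sectional curvature K.  Differential forms at a point are
represented in the adapted coframe e^0,...,e^4: a form is a function from index
sets (subsets of {0..4}) to real coefficients, i.e. the coefficient of e^{i1...ik}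
with i1<...<ik.  Natural forms have constant coefficients in adapted frames, so all
conditions below are pointwise identities in this exterior algebra.\<close>

type_synonym form = "nat set \<Rightarrow> real"

definition zf :: form where "zf = (\<lambda>S. 0)"

definition fadd :: "form \<Rightarrow> form \<Rightarrow> form" where
  "fadd a b = (\<lambda>S. a S + b S)"

definition fsc :: "real \<Rightarrow> form \<Rightarrow> form" where
  "fsc c a = (\<lambda>S. c * a S)"

definition ef :: "nat \<Rightarrow> form" where
  "ef i = (\<lambda>S. if S = {i} then 1 else 0)"

text \<open>sign of the shuffle putting A before B into increasing order\<close>
definition wsgn :: "nat set \<Rightarrow> nat set \<Rightarrow> real" where
  "wsgn A B = (-1) ^ card {(a, b). a \<in> A \<and> b \<in> B \<and> b < a}"

definition wedge :: "form \<Rightarrow> form \<Rightarrow> form" where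
  "wedge \<alpha> \<beta> = (\<lambda>S. if S \<subseteq> {..<5}
      then (\<Sum>A\<in>Pow S. wsgn A (S - A) * \<alpha> A * \<beta> (S - A)) else 0)"

definition ev2 :: "form \<Rightarrow> (nat \<Rightarrow> real) \<Rightarrow> (nat \<Rightarrow> real) \<Rightarrow> real" where
  "ev2 \<omega> x y = (\<Sum>i<5. \<Sum>j<5. if i < j then \<omega> {i, j} * (x i * y j - x j * y i) else 0)"

definition theta :: "real \<Rightarrow> form" where "theta s = fsc s (ef 0)"
definition alpha0 :: form where "alpha0 = wedge (ef 1) (ef 2)"
definition alpha1 :: form where
  "alpha1 = fadd (wedge (ef 1) (ef 4)) (fsc (-1) (wedge (ef 2) (ef 3)))"
definition alpha2 :: form where "alpha2 = wedge (ef 3) (ef 4)"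
definition dtheta :: form where "dtheta = fadd (wedge (ef 3) (ef 1)) (wedge (ef 4) (ef 2))"

fun comb :: "real \<times> real \<times> real \<times> real \<Rightarrow> form" where
  "comb (c0, c1, c2, c3) = (\<lambda>S. c0 * alpha0 S + c1 * alpha1 S + c2 * alpha2 S + c3 * dtheta S)"

text \<open>exterior derivative of a natural 2-form, via the structure equations for constant
sectional curvature K:  d alpha_0 = s^-2 theta^alpha_1,
d alpha_1 = 2 s^-2 theta^alpha_2 - 2K theta^alpha_0, d alpha_2 = -K theta^alpha_1, d(d theta) = 0\<close>
fun dcomb :: "real \<Rightarrow> real \<Rightarrow> real \<times> real \<times> real \<times> real \<Rightarrow> form" where
  "dcomb s K (c0, c1, c2, c3) =
     wedge (theta s) (comb (- 2 * K * c1, c0 / s^2 - K * c2, 2 * c1 / s^2, 0))"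

text \<open>d(theta~ ^ omega) for theta~ = -2p theta and omega a natural 2-form:
 d theta~ ^ omega - theta~ ^ d omega\<close>
definition dthw :: "real \<Rightarrow> real \<Rightarrow> real \<Rightarrow> real \<times> real \<times> real \<times> real \<Rightarrow> form" where
  "dthw s K p c = fadd (fsc (- 2 * p) (wedge dtheta (comb c)))
                       (fsc (2 * p) (wedge (theta s) (dcomb s K c)))"

definition SU2 :: "form \<Rightarrow> form \<Rightarrow> form \<Rightarrow> form \<Rightarrow> bool" where
  "SU2 th w1 w2 w3 \<longleftrightarrow>
     wedge th (wedge w1 w1) \<noteq> zf \<and>
     wedge w1 w2 = zf \<and> wedge w1 w3 = zf \<and> wedge w2 w3 = zf \<and>
     wedge w2 w1 = zf \<and> wedge w3 w1 = zf \<and> wedge w3 w2 = zf \<and>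
     (\<exists>v. v \<noteq> zf \<and> wedge w1 w1 = fsc 2 v \<and> wedge w2 w2 = fsc 2 v \<and> wedge w3 w3 = fsc 2 v) \<and>
     (\<forall>x y. (\<forall>z. ev2 w1 x z = ev2 w2 y z) \<longrightarrow> ev2 w3 x y \<ge> 0)"

definition hypo :: "real \<Rightarrow> real \<Rightarrow> real \<Rightarrow> _ \<Rightarrow> _ \<Rightarrow> _ \<Rightarrow> bool" where
  "hypo s K p c1 c2 c3 \<longleftrightarrow> dcomb s K c1 = zf \<and> dthw s K p c2 = zf \<and> dthw s K p c3 = zf"

definition nearly_hypo :: "real \<Rightarrow> real \<Rightarrow> real \<Rightarrow> _ \<Rightarrow> _ \<Rightarrow> _ \<Rightarrow> bool" where
  "nearly_hypo s K p c1 c2 c3 \<longleftrightarrow>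
     dcomb s K c2 = fsc 3 (wedge (fsc (- 2 * p) (theta s)) (comb c3)) \<and>
     dthw s K p c1 = fsc (- 2) (wedge (comb c1) (comb c1))"

definition double_hypo :: "real \<Rightarrow> real \<Rightarrow> real \<Rightarrow> _ \<Rightarrow> _ \<Rightarrow> _ \<Rightarrow> bool" where
  "double_hypo s K p c1 c2 c3 \<longleftrightarrow> hypo s K p c1 c2 c3 \<and> nearly_hypo s K p c1 c2 c3"

end

theory Submission imports Defs "HOL-Library.Nat_Bijection" begin

definition bf :: "nat set \<Rightarrow> form" where "bf T = (\<lambda>S. if S = T then 1 else 0)"

lemma seteq: "finite A \<Longrightarrow> finite B \<Longrightarrow> (A = B) = (set_encode A = set_encode B)"
  by (simp add: set_encode_eq)

lemma wedge_bf_disj: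
  assumes "A \<inter> B = {}" "A \<union> B \<subseteq> {..<5}"
  shows "wedge (bf A) (bf B) = fsc (wsgn A B) (bf (A \<union> B))"
proof (rule ext)
  fix S
  show "wedge (bf A) (bf B) S = fsc (wsgn A B) (bf (A \<union> B)) S"
  proof (cases "S \<subseteq> {..<5}")
    case True
    have fin: "finite (Pow S)" using True finite_subset by blast
    have "wedge (bf A) (bf B) S = (\<Sum>X\<in>Pow S. wsgn X (S - X) * bf A X * bf B (S - X))"
      using True by (simp add: wedge_def)
    also have "\<dots> = (\<Sum>X\<in>Pow S. if X = A then (if S - A = B then wsgn A B else 0) else 0)"
      by (rule sum.cong) (auto simp: bf_def)
    also have "\<dots> = (if A \<in> Pow S then (if S - A = B then wsgn A B else 0) else 0)"
      using fin by (simp add: sum.delta')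
    also have "\<dots> = fsc (wsgn A B) (bf (A \<union> B)) S"
      unfolding fsc_def bf_def using assms by auto
    finally show ?thesis .
  next
    case False
    then have "S \<noteq> A \<union> B" using assms by auto
    then show ?thesis unfolding wedge_def fsc_def bf_def using assms
      by (auto intro!: sum.neutral split: if_splits)
  qed
qed

lemma wedge_bf_ov:
  assumes "A \<inter> B \<noteq> {}"
  shows "wedge (bf A) (bf B) = zf"
proof (rule ext)
  fix S
  show "wedge (bf A) (bf B) S = zf S"
    unfolding wedge_def bf_def zf_def using assms
    by (auto intro!: sum.neutral split: if_splits)
qed

lemma wsgn_eq: "finite A \<Longrightarrow> finite B \<Longrightarrow> wsgn A B = (-1) ^ (\<Sum>a\<in>A. \<Sum>b\<in>B. if b < a then 1 else 0)"
proof -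
  assume fA: "finite A" and fB: "finite B"
  have e: "{(a, b). a \<in> A \<and> b \<in> B \<and> b < a} = Sigma A (\<lambda>a. {b\<in>B. b < a})" by blast
  have "card (Sigma A (\<lambda>a. {b\<in>B. b < a})) = (\<Sum>a\<in>A. card {b\<in>B. b < a})"
    using fA fB by (intro card_SigmaI) auto
  also have "\<dots> = (\<Sum>a\<in>A. \<Sum>b\<in>B. if b < a then 1 else 0)"
  proof (rule sum.cong[OF refl])
    fix a show "card {b\<in>B. b < a} = (\<Sum>b\<in>B. if b < a then 1 else 0)"
      using fB by (simp only: card_eq_sum sum.inter_filter)
  qed
  finally show ?thesis unfolding wsgn_def e by (simp only:)
qed

lemma wedge_fadd_l: "wedge (fadd a b) c = fadd (wedge a c) (wedge b c)"
  unfolding wedge_def fadd_def by (rule ext) (simp add: distrib_left distrib_right sum.distrib)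
lemma wedge_fadd_r: "wedge c (fadd a b) = fadd (wedge c a) (wedge c b)"
  unfolding wedge_def fadd_def by (rule ext) (simp add: distrib_left distrib_right sum.distrib)
lemma wedge_fsc_l: "wedge (fsc k a) c = fsc k (wedge a c)"
  unfolding wedge_def fsc_def by (rule ext) (simp add: sum_distrib_left mult_ac)
lemma wedge_fsc_r: "wedge c (fsc k a) = fsc k (wedge c a)"
  unfolding wedge_def fsc_def by (rule ext) (simp add: sum_distrib_left mult_ac)
lemma wedge_zf_l: "wedge zf c = zf" unfolding wedge_def zf_def by auto
lemma wedge_zf_r: "wedge c zf = zf" unfolding wedge_def zf_def by auto


lemma fsc_one: "fsc 1 x = x" unfolding fsc_def by simp
lemma fsc_fsc: "fsc a (fsc b x) = fsc (a*b) x" unfolding fsc_def by (simp add: mult.assoc)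
lemma fsc_0: "fsc 0 x = zf" unfolding fsc_def zf_def by simp
lemma fsc_zf: "fsc a zf = zf" unfolding fsc_def zf_def by simp
lemma fadd_zf1: "fadd zf x = x" unfolding fadd_def zf_def by simp
lemma fadd_zf2: "fadd x zf = x" unfolding fadd_def zf_def by simp
lemma ef_bf: "ef i = bf {i}" unfolding ef_def bf_def by simp

lemmas wsimps = wedge_fadd_l wedge_fadd_r wedge_fsc_l wedge_fsc_r wedge_zf_l wedge_zf_r
  wedge_bf_disj wedge_bf_ov wsgn_eq fsc_one fsc_fsc fsc_zf fadd_zf1 fadd_zf2 ef_bf

lemma alpha0_bf: "alpha0 = bf {1,2}" unfolding alpha0_def by (simp add: wsimps insert_commute)
lemma alpha1_bf: "alpha1 = fadd (bf {1,4}) (fsc (-1) (bf {2,3}))" unfolding alpha1_def by (simp add: wsimps insert_commute)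
lemma alpha2_bf: "alpha2 = bf {3,4}" unfolding alpha2_def by (simp add: wsimps insert_commute)
lemma dtheta_bf: "dtheta = fadd (fsc (-1) (bf {1,3})) (fsc (-1) (bf {2,4}))" unfolding dtheta_def by (simp add: wsimps insert_commute)
lemma theta_bf: "theta s = fsc s (bf {0})" unfolding theta_def by (simp add: wsimps insert_commute)

lemma comb_bf: "comb (c0,c1,c2,c3) = fadd (fsc c0 (bf{1,2})) (fadd (fsc c1 (bf{1,4})) (fadd (fsc (-c1) (bf{2,3}))
   (fadd (fsc c2 (bf{3,4})) (fadd (fsc (-c3) (bf{1,3})) (fsc (-c3) (bf{2,4}))))))"
  by (simp add: alpha0_bf alpha1_bf alpha2_bf dtheta_bf fadd_def fsc_def fun_eq_iff algebra_simps)

definition Q :: "real \<times> real \<times> real \<times> real \<Rightarrow> real \<times> real \<times> real \<times> real \<Rightarrow> real" where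
  "Q x y = (case x of (x0,x1,x2,x3) \<Rightarrow> case y of (y0,y1,y2,y3) \<Rightarrow> x0*y2 + x2*y0 - 2*x1*y1 - 2*x3*y3)"

lemma fadd_same1: "fadd (fsc a X) (fadd (fsc b X) Y) = fadd (fsc (a+b) X) Y"
  unfolding fadd_def fsc_def by (simp add: algebra_simps)
lemma fadd_same2: "fadd (fsc a X) (fsc b X) = fsc (a+b) X"
  unfolding fadd_def fsc_def by (simp add: algebra_simps)
lemma fsc_fadd: "fsc k (fadd a b) = fadd (fsc k a) (fsc k b)"
  unfolding fadd_def fsc_def by (simp add: algebra_simps)

lemma wedge_comb: "wedge (comb (x0,x1,x2,x3)) (comb (y0,y1,y2,y3)) = fsc (Q (x0,x1,x2,x3) (y0,y1,y2,y3)) (bf {1,2,3,4})"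
  unfolding comb_bf
  by (simp add: wsimps insert_commute fadd_same1 fadd_same2 Q_def algebra_simps)

fun comb0 :: "real \<times> real \<times> real \<times> real \<Rightarrow> form" where
 "comb0 (c0,c1,c2,c3) = fadd (fsc c0 (bf{0,1,2})) (fadd (fsc c1 (bf{0,1,4})) (fadd (fsc (-c1) (bf{0,2,3}))
   (fadd (fsc c2 (bf{0,3,4})) (fadd (fsc (-c3) (bf{0,1,3})) (fsc (-c3) (bf{0,2,4}))))))"

lemma theta_comb: "wedge (theta s) (comb (x0,x1,x2,x3)) = fsc s (comb0 (x0,x1,x2,x3))"
  unfolding comb_bf theta_bf
  by (simp add: wsimps insert_commute fsc_fadd mult.commute)

lemma fsc_comb0: "fsc k (comb0 (x0,x1,x2,x3)) = comb0 (k*x0,k*x1,k*x2,k*x3)"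
  by (simp add: fsc_fadd fsc_fsc)

lemma comb0_zero: "comb0 (0,0,0,0) = zf"
  by (simp add: fsc_def zf_def fadd_def)

lemma comb0_iff: "comb0 (x0,x1,x2,x3) = comb0 (y0,y1,y2,y3) \<longleftrightarrow> x0=y0 \<and> x1=y1 \<and> x2=y2 \<and> x3=y3"
proof
  assume h: "comb0 (x0,x1,x2,x3) = comb0 (y0,y1,y2,y3)"
  have "x0 = y0" using fun_cong[OF h, of "{0,1,2}"] by (simp add: fsc_def fadd_def bf_def seteq)
  moreover have "x1 = y1" using fun_cong[OF h, of "{0,1,4}"] by (simp add: fsc_def fadd_def bf_def seteq)
  moreover have "x2 = y2" using fun_cong[OF h, of "{0,3,4}"] by (simp add: fsc_def fadd_def bf_def seteq)
  moreover have "x3 = y3" using fun_cong[OF h, of "{0,1,3}"] by (simp add: fsc_def fadd_def bf_def seteq)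
  ultimately show "x0=y0 \<and> x1=y1 \<and> x2=y2 \<and> x3=y3" by blast
qed simp

lemma comb_iff: "comb (x0,x1,x2,x3) = comb (y0,y1,y2,y3) \<longleftrightarrow> x0=y0 \<and> x1=y1 \<and> x2=y2 \<and> x3=y3"
proof
  assume h: "comb (x0,x1,x2,x3) = comb (y0,y1,y2,y3)"
  note h' = h[unfolded comb_bf]
  have "x0 = y0" using fun_cong[OF h', of "{1,2}"] by (simp add: fsc_def fadd_def bf_def seteq)
  moreover have "x1 = y1" using fun_cong[OF h', of "{1,4}"] by (simp add: fsc_def fadd_def bf_def seteq)
  moreover have "x2 = y2" using fun_cong[OF h', of "{3,4}"] by (simp add: fsc_def fadd_def bf_def seteq)
  moreover have "x3 = y3" using fun_cong[OF h', of "{1,3}"] by (simp add: fsc_def fadd_def bf_def seteq)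
  ultimately show "x0=y0 \<and> x1=y1 \<and> x2=y2 \<and> x3=y3" by blast
qed simp

lemma fsc_bf_iff: "fsc a (bf T) = fsc b (bf T) \<longleftrightarrow> a = b"
proof
  assume "fsc a (bf T) = fsc b (bf T)"
  from fun_cong[OF this, of T] show "a = b" by (simp add: fsc_def bf_def)
qed simp

lemma fsc_bf_zf: "fsc a (bf T) = zf \<longleftrightarrow> a = 0"
proof
  assume "fsc a (bf T) = zf"
  from fun_cong[OF this, of T] show "a = 0" by (simp add: fsc_def bf_def zf_def)
qed (simp add: fsc_def zf_def)

lemma dtheta_comb: "dtheta = comb (0,0,0,1)"
  unfolding comb_bf dtheta_bf by (simp add: fsc_def fadd_def zf_def)

lemma dcomb_eq: "dcomb s K (c0,c1,c2,c3) = comb0 (s*(- 2 * K * c1), s*(c0 / s^2 - K * c2), s*(2 * c1 / s^2), 0)"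
  by (simp only: dcomb.simps theta_comb fsc_comb0) simp

lemma dthw_eq: "dthw s K p (c0,c1,c2,c3) = fsc (4*p*c3) (bf {1,2,3,4})"
  unfolding dthw_def dtheta_comb wedge_comb dcomb_eq theta_bf
  by (simp add: wsimps insert_commute fsc_fadd Q_def mult.assoc)

lemma th_comb: "wedge (fsc (- 2 * p) (theta s)) (comb (x0,x1,x2,x3)) = comb0 ((-2*p*s)*x0, (-2*p*s)*x1, (-2*p*s)*x2, (-2*p*s)*x3)"
  by (simp only: wedge_fsc_l theta_comb fsc_fsc fsc_comb0) (simp add: mult.assoc)

theorem mainTheorem10:
  fixes s p K a0 a2 a3 :: real and c f :: "real \<times> real \<times> real \<times> real"
  assumes "s > 0" and "p \<noteq> 0" and "a2 \<noteq> 0"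
    and "K = a0 / (a2 * s^2)"
    and "SU2 (fsc (- 2 * p) (theta s)) (comb (a0, 0, a2, a3)) (comb c) (comb f)"
  shows "(double_hypo s K p (a0, 0, a2, a3) c f \<longleftrightarrow>
          (\<exists>b0 b1 b2.
             comb c = comb (b0, b1, b2, 0) \<and>
             comb f = comb (K * b1 / (3 * p), (s^2 * K * b2 - b0) / (6 * s^2 * p),
                            - b1 / (3 * s^2 * p), 0) \<and>
             a3^2 - a0 * a2 = a3 * p \<and>
             b1^2 - b0 * b2 = a3 * p \<and>
             a0 * b2 + a2 * b0 = 0 \<and>
             b0^2 - 2 * s^2 * K * b0 * b2 + s^4 * K^2 * b2^2 + 4 * s^2 * K * b1^2
               = 36 * s^4 * a3 * p^3 \<and>
             a0 * a2 > 0 \<and> a3 * p > 0))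
       \<and> (double_hypo s K p (a0, 0, a2, a3) c f \<longrightarrow> K > 0 \<and> K = 9 * s^2 * p^2)"
proof -
  obtain c0 c1 c2 c3 where c: "c = (c0,c1,c2,c3)" by (cases c) auto
  obtain f0 f1 f2 f3 where f: "f = (f0,f1,f2,f3)" by (cases f) auto
  have sp: "s \<noteq> 0" using assms(1) by simp
  have p: "p \<noteq> 0" by fact
  have a0K: "a0 = K*a2*s^2" using assms(1,3,4) by (simp add: field_simps)
  have Kz: "a0 / s^2 - K*a2 = 0" using a0K sp by (simp add: field_simps)
  have hyp_iff: "hypo s K p (a0,0,a2,a3) c f \<longleftrightarrow> c3 = 0 \<and> f3 = 0"
    unfolding hypo_def c f dcomb_eq dthw_eq using p by (simp add: Kz fsc_0 fadd_zf1 fsc_bf_zf)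
  have nh_iff: "nearly_hypo s K p (a0,0,a2,a3) c f \<longleftrightarrow>
     s*(- 2 * K * c1) = 3*((-2*p*s)*f0) \<and> s*(c0 / s^2 - K * c2) = 3*((-2*p*s)*f1) \<and>
     s*(2 * c1 / s^2) = 3*((-2*p*s)*f2) \<and> 0 = 3*((-2*p*s)*f3) \<and>
     4*p*a3 = -2 * (2*a0*a2 - 2*a3^2)"
    unfolding nearly_hypo_def c f dcomb_eq th_comb fsc_comb0 comb0_iff dthw_eq wedge_comb fsc_fsc fsc_bf_iff
    by (simp add: Q_def power2_eq_square)
  from assms(5)[unfolded SU2_def c f wedge_comb th_comb] obtain v where
    q12: "fsc (a0*c2 + a2*c0 - 2*a3*c3) (bf {1,2,3,4}) = zf" and
    vnz: "v \<noteq> zf" and v1: "fsc (2*a0*a2 - 2*a3*a3) (bf {1,2,3,4}) = fsc 2 v" and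
    v2: "fsc (2*c0*c2 - 2*c1*c1 - 2*c3*c3) (bf {1,2,3,4}) = fsc 2 v" and
    v3: "fsc (2*f0*f2 - 2*f1*f1 - 2*f3*f3) (bf {1,2,3,4}) = fsc 2 v"
    by (auto simp: Q_def algebra_simps)
  have Qac: "a0*c2 + a2*c0 - 2*a3*c3 = 0" using q12 by (simp add: fsc_bf_zf)
  have Qcc: "2*a0*a2 - 2*a3*a3 = 2*c0*c2 - 2*c1*c1 - 2*c3*c3" using v1 v2 fsc_bf_iff by metis
  have Qff: "2*a0*a2 - 2*a3*a3 = 2*f0*f2 - 2*f1*f1 - 2*f3*f3" using v1 v3 fsc_bf_iff by metis
  have Qnz: "2*a0*a2 - 2*a3*a3 \<noteq> 0"
  proof
    assume z: "2*a0*a2 - 2*a3*a3 = 0"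
    have "fsc 2 v = zf" using v1 fsc_bf_zf[of "2*a0*a2 - 2*a3*a3"] z by metis
    then have "fsc (1/2) (fsc 2 v) = zf" by (simp add: fsc_zf)
    then show False using vnz by (simp add: fsc_fsc fsc_one)
  qed
  have dh_iff: "double_hypo s K p (a0, 0, a2, a3) c f \<longleftrightarrow>
     c3 = 0 \<and> f3 = 0 \<and> 3*p*f0 = K*c1 \<and> 6*s^2*p*f1 = s^2*K*c2 - c0 \<and> 3*s^2*p*f2 = -c1
       \<and> a3^2 - a0*a2 = a3*p"
  proof -
    have E0: "s*(- 2 * K * c1) = 3*((-2*p*s)*f0) \<longleftrightarrow> 3*p*f0 = K*c1"
    proof -
      have "s*(- 2 * K * c1) = 3*((-2*p*s)*f0) \<longleftrightarrow> s*(2*(3*p*f0 - K*c1)) = 0" by (auto simp: algebra_simps)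
      then show ?thesis using sp by (simp add: mult_ac)
    qed
    have E1: "s*(c0 / s^2 - K * c2) = 3*((-2*p*s)*f1) \<longleftrightarrow> 6*s^2*p*f1 = s^2*K*c2 - c0"
    proof -
      have "s*(c0 / s^2 - K * c2) = (c0 - s^2*K*c2) / s" using sp by (simp add: field_simps power2_eq_square)
      then have "s*(c0 / s^2 - K * c2) = 3*((-2*p*s)*f1) \<longleftrightarrow> (c0 - s^2*K*c2) = 3*((-2*p*s)*f1) * s"
        using sp by (simp add: divide_eq_eq)
      then show ?thesis by (auto simp: algebra_simps power2_eq_square)
    qed
    have E2: "s*(2 * c1 / s^2) = 3*((-2*p*s)*f2) \<longleftrightarrow> 3*s^2*p*f2 = -c1"
    proof -
      have "s*(2 * c1 / s^2) = (2*c1) / s" using sp by (simp add: field_simps power2_eq_square)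
      then have "s*(2 * c1 / s^2) = 3*((-2*p*s)*f2) \<longleftrightarrow> 2*c1 = 3*((-2*p*s)*f2) * s"
        using sp by (simp add: divide_eq_eq)
      then show ?thesis by (auto simp: algebra_simps power2_eq_square)
    qed
    have E3: "0 = 3*((-2*p*s)*f3) \<longleftrightarrow> f3 = 0" using sp p by simp
    have E4: "4*p*a3 = -2 * (2*a0*a2 - 2*a3^2) \<longleftrightarrow> a3^2 - a0*a2 = a3*p" by (auto simp: algebra_simps)
    show ?thesis unfolding double_hypo_def hyp_iff nh_iff E0 E1 E2 E3 E4 by blast
  qed
  have fwd: "double_hypo s K p (a0, 0, a2, a3) c f \<Longrightarrow>
      (\<exists>b0 b1 b2.
             comb c = comb (b0, b1, b2, 0) \<and>
             comb f = comb (K * b1 / (3 * p), (s^2 * K * b2 - b0) / (6 * s^2 * p),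
                            - b1 / (3 * s^2 * p), 0) \<and>
             a3^2 - a0 * a2 = a3 * p \<and>
             b1^2 - b0 * b2 = a3 * p \<and>
             a0 * b2 + a2 * b0 = 0 \<and>
             b0^2 - 2 * s^2 * K * b0 * b2 + s^4 * K^2 * b2^2 + 4 * s^2 * K * b1^2
               = 36 * s^4 * a3 * p^3 \<and>
             a0 * a2 > 0 \<and> a3 * p > 0) \<and> K > 0 \<and> K = 9 * s^2 * p^2"
  proof -
    assume "double_hypo s K p (a0, 0, a2, a3) c f"
    then have c3: "c3 = 0" and f3: "f3 = 0" and e0: "3*p*f0 = K*c1"
      and e1: "6*s^2*p*f1 = s^2*K*c2 - c0" and e2: "3*s^2*p*f2 = -c1"
      and ea: "a3^2 - a0*a2 = a3*p" using dh_iff by auto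
    have ac: "a0*c2 + a2*c0 = 0" using Qac c3 by simp
    have cc: "c1^2 - c0*c2 = a3*p" using Qcc c3 ea by (simp add: power2_eq_square algebra_simps)
    have ff: "f1^2 - f0*f2 = a3*p" using Qff f3 ea by (simp add: power2_eq_square algebra_simps)
    have apnz: "a3*p \<noteq> 0" using Qnz ea by (simp add: power2_eq_square algebra_simps)
    have c0e: "c0 = - K*s^2*c2"
    proof -
      have "a2*(K*s^2*c2 + c0) = 0" using ac a0K by (simp add: algebra_simps)
      then have "K*s^2*c2 + c0 = 0" using assms(3) by simp
      then show ?thesis by (simp add: algebra_simps)
    qed
    have e1': "3*p*f1 = K*c2" using e1 c0e sp by (simp add: algebra_simps power2_eq_square)
    have cc': "c1^2 + K*s^2*c2^2 = a3*p" using cc c0e by (simp add: algebra_simps power2_eq_square)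
    have "9*p^2*s^2*(f1^2 - f0*f2) = s^2*(3*p*f1)^2 - (3*p*f0)*(3*s^2*p*f2)"
      by (simp add: algebra_simps power2_eq_square)
    also have "\<dots> = K*(c1^2 + K*s^2*c2^2)" using e0 e1' e2 by (simp add: algebra_simps power2_eq_square)
    finally have "9*p^2*s^2*(a3*p) = K*(a3*p)" using ff cc' by simp
    then have K9: "K = 9 * s^2 * p^2" using apnz by (simp add: algebra_simps)
    have Kpos: "K > 0" using K9 sp p by simp
    have appos: "a3*p > 0"
    proof -
      have "a3*p \<ge> 0" using cc' Kpos by (metis add_nonneg_nonneg mult_nonneg_nonneg less_le zero_le_power2)
      then show ?thesis using apnz by (simp only: less_le) simp
    qed
    have aa: "a0*a2 > 0"
    proof -
      have "a0*a2 = K*(a2^2*s^2)" using a0K by (simp add: power2_eq_square)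
      moreover have "a2^2*s^2 > 0" using assms(1,3) by simp
      ultimately show ?thesis using Kpos by simp
    qed
    have big: "c0^2 - 2 * s^2 * K * c0 * c2 + s^4 * K^2 * c2^2 + 4 * s^2 * K * c1^2
               = 36 * s^4 * a3 * p^3"
    proof -
      have "c0^2 - 2 * s^2 * K * c0 * c2 + s^4 * K^2 * c2^2 + 4 * s^2 * K * c1^2
           = 4*s^2*K*(c1^2 + K*s^2*c2^2)" using c0e by (simp add: algebra_simps power2_eq_square power4_eq_xxxx)
      also have "\<dots> = 36 * s^4 * a3 * p^3" using cc' K9 by (simp add: algebra_simps power2_eq_square power4_eq_xxxx power3_eq_cube)
      finally show ?thesis .
    qed
    have fc: "comb f = comb (K * c1 / (3 * p), (s^2 * K * c2 - c0) / (6 * s^2 * p), - c1 / (3 * s^2 * p), 0)"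
      unfolding f comb_iff using e0 e1 e2 f3 sp p by (auto simp: field_simps)
    show ?thesis
      using fc big appos aa ea cc ac Kpos K9 unfolding c c3 by (intro conjI exI[of _ c0] exI[of _ c1] exI[of _ c2]) auto
  qed
  have bwd: "(\<exists>b0 b1 b2.
             comb c = comb (b0, b1, b2, 0) \<and>
             comb f = comb (K * b1 / (3 * p), (s^2 * K * b2 - b0) / (6 * s^2 * p),
                            - b1 / (3 * s^2 * p), 0) \<and>
             a3^2 - a0 * a2 = a3 * p \<and>
             b1^2 - b0 * b2 = a3 * p \<and>
             a0 * b2 + a2 * b0 = 0 \<and>
             b0^2 - 2 * s^2 * K * b0 * b2 + s^4 * K^2 * b2^2 + 4 * s^2 * K * b1^2
               = 36 * s^4 * a3 * p^3 \<and>
             a0 * a2 > 0 \<and> a3 * p > 0) \<Longrightarrow> double_hypo s K p (a0, 0, a2, a3) c f"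
  proof -
    assume "\<exists>b0 b1 b2.
             comb c = comb (b0, b1, b2, 0) \<and>
             comb f = comb (K * b1 / (3 * p), (s^2 * K * b2 - b0) / (6 * s^2 * p),
                            - b1 / (3 * s^2 * p), 0) \<and>
             a3^2 - a0 * a2 = a3 * p \<and>
             b1^2 - b0 * b2 = a3 * p \<and>
             a0 * b2 + a2 * b0 = 0 \<and>
             b0^2 - 2 * s^2 * K * b0 * b2 + s^4 * K^2 * b2^2 + 4 * s^2 * K * b1^2
               = 36 * s^4 * a3 * p^3 \<and>
             a0 * a2 > 0 \<and> a3 * p > 0"
    then obtain b0 b1 b2 where h1: "comb c = comb (b0, b1, b2, 0)" and
      h2: "comb f = comb (K * b1 / (3 * p), (s^2 * K * b2 - b0) / (6 * s^2 * p), - b1 / (3 * s^2 * p), 0)"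
      and ea: "a3^2 - a0 * a2 = a3 * p" by blast
    have cc: "c0 = b0" "c1 = b1" "c2 = b2" "c3 = 0" using h1 unfolding c comb_iff by auto
    have ff: "f0 = K * b1 / (3 * p)" "f1 = (s^2 * K * b2 - b0) / (6 * s^2 * p)" "f2 = - b1 / (3 * s^2 * p)" "f3 = 0"
      using h2 unfolding f comb_iff by auto
    show ?thesis unfolding dh_iff using cc ff ea sp p by (simp add: field_simps)
  qed
  show ?thesis using fwd bwd by blast
qed
end
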